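(* Let $t_j^i=\binom{i}{j}$ for $0\le j\le i$, and let $h_{j,k}^i$ ($0\le k\le i$, $0\le j\le i-k$) be defined by $h_{j,0}^i=t_j^i$ and $h_{j,k}^i=h_{j,k-1}^{i-1}+h_{j,k-1}^{i}+h_{j+1,k-1}^{i}$ for $k\ge 1$. Then for any $0\leq k \leq i$, $0\leq j \leq i-k$, $$h_{j,k}^i=\sum_{\ell=0}^{k}\binom{2\ell+i-k}{\ell+j}\binom{k}{\ell}.$$ *)

theory Defs
  imports Main
begin

text \<open>t i j = binomial i j; hh i j k = h^i_{j,k}. Defined for all naturals; the
recursion only refers to in-domain values when (i,j,k) is in the domain
0 <= k <= i, 0 <= j <= i - k.\<close>

fun hh :: "nat \<Rightarrow> nat \<Rightarrow> nat \<Rightarrow> nat" where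
  "hh i j 0 = i choose j"
| "hh i j (Suc k) = hh (i - 1) j k + hh i j k + hh i (j + 1) k"

end

theory Submission
  imports Defs
begin

definition G :: "nat \<Rightarrow> nat \<Rightarrow> nat \<Rightarrow> nat" where
  "G n j k = (\<Sum>l = 0..k. ((2 * l + n) choose (l + j)) * (k choose l))"

lemma G_step: "G n j (Suc k) = G n j k + G (Suc n) j k + G (Suc n) (Suc j) k"
proof -
  have A: "G n j (Suc k) = (n choose j) +
     (\<Sum>m = 0..k. ((2 * Suc m + n) choose (Suc m + j)) * (k choose m)) +
     (\<Sum>m = 0..k. ((2 * Suc m + n) choose (Suc m + j)) * (k choose Suc m))"
  proof -
    have "G n j (Suc k) = (\<Sum>l = 0..Suc k. ((2 * l + n) choose (l + j)) * (Suc k choose l))"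
      by (simp add: G_def)
    also have "\<dots> = ((2 * 0 + n) choose (0 + j)) * (Suc k choose 0) +
        (\<Sum>m = 0..k. ((2 * Suc m + n) choose (Suc m + j)) * (Suc k choose Suc m))"
      by (simp only: sum.atLeast0_atMost_Suc_shift o_def)
    also have "\<dots> = (n choose j) +
        (\<Sum>m = 0..k. ((2 * Suc m + n) choose (Suc m + j)) * (k choose m)
           + ((2 * Suc m + n) choose (Suc m + j)) * (k choose Suc m))"
      by (simp only: binomial_Suc_Suc add_mult_distrib2 binomial_n_0 mult_1_right mult_zero_left add_0_left mult_0 mult_0_right)
    also have "\<dots> = (n choose j) +
     (\<Sum>m = 0..k. ((2 * Suc m + n) choose (Suc m + j)) * (k choose m)) +
     (\<Sum>m = 0..k. ((2 * Suc m + n) choose (Suc m + j)) * (k choose Suc m))"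
      by (simp only: sum.distrib add.assoc)
    finally show ?thesis .
  qed
  have B: "(n choose j) + (\<Sum>m = 0..k. ((2 * Suc m + n) choose (Suc m + j)) * (k choose Suc m))
      = G n j k"
  proof -
    have "(n choose j) + (\<Sum>m = 0..k. ((2 * Suc m + n) choose (Suc m + j)) * (k choose Suc m))
       = (\<Sum>l = 0..Suc k. ((2 * l + n) choose (l + j)) * (k choose l))"
      by (simp only: sum.atLeast0_atMost_Suc_shift o_def) simp
    also have "\<dots> = G n j k" unfolding G_def by (simp add: sum.atLeast0_atMost_Suc)
    finally show ?thesis .
  qed
  have C: "(\<Sum>m = 0..k. ((2 * Suc m + n) choose (Suc m + j)) * (k choose m))
      = G (Suc n) j k + G (Suc n) (Suc j) k"
  proof -
    have "\<And>m. (2 * Suc m + n) choose (Suc m + j) =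
       ((2*m + Suc n) choose (m + j)) + ((2*m + Suc n) choose (m + Suc j))"
    proof -
      fix m
      have "(2 * Suc m + n) = Suc (2*m + Suc n)" "Suc m + j = Suc (m + j)" by simp_all
      then show "(2 * Suc m + n) choose (Suc m + j) =
       ((2*m + Suc n) choose (m + j)) + ((2*m + Suc n) choose (m + Suc j))"
        by simp
    qed
    then show ?thesis unfolding G_def by (simp add: sum.distrib algebra_simps)
  qed
  show ?thesis using A B C by simp
qed

lemma hh_G: "k \<le> i \<Longrightarrow> hh i j k = G (i - k) j k"
proof (induction k arbitrary: i j)
  case 0
  then show ?case by (simp add: G_def)
next
  case (Suc k)
  have e1: "i - 1 - k = i - Suc k" by simp
  have e2: "i - k = Suc (i - Suc k)" using Suc.prems by simp
  have "hh i j (Suc k) = hh (i - 1) j k + hh i j k + hh i (j + 1) k" by simp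
  also have "\<dots> = G (i - Suc k) j k + G (Suc (i - Suc k)) j k + G (Suc (i - Suc k)) (Suc j) k"
    using Suc.IH[of "i - 1" j] Suc.IH[of i j] Suc.IH[of i "j+1"] Suc.prems e1 e2 by simp
  also have "\<dots> = G (i - Suc k) j (Suc k)" by (simp add: G_step)
  finally show ?case .
qed

theorem theorem9:
  fixes i j k :: nat
  assumes "k \<le> i" and "j \<le> i - k"
  shows "hh i j k = (\<Sum>l = 0..k. ((2 * l + i - k) choose (l + j)) * (k choose l))"
proof -
  have "hh i j k = G (i - k) j k" using hh_G assms(1) by simp
  also have "\<dots> = (\<Sum>l = 0..k. ((2 * l + i - k) choose (l + j)) * (k choose l))"
    unfolding G_def using assms(1) by (intro sum.cong) auto
  finally show ?thesis .
qed

end
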